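(* Let $n\geq 2$. The polynomial identity $Q_n(x,y,z,t)=Q_n(x+nz+nt,y,-t,-z)$ holds if and only if, for all $0\le k\le n-1$, $$Q_{n,k}(x,t)=(x-k+t+1)\,Q_{n-1,k}(x+t+1,t)+(n+k-2)\,Q_{n-1,k-1}(x+t+1,t).$$
   Context: Define polynomials $Q_m(x,y,z,t)$ by $Q_1=1$ and $Q_{m+1}=[x+mz+(y+t)(m+y\partial_y)]Q_m$ for $m\ge1$ ($\partial_y$ the partial derivative in $y$), and define $Q_{m,k}(x,t)$ by $Q_m(x,y,1,t)=\sum_{k=0}^{m-1}Q_{m,k}(x,t)y^k$, with the convention $Q_{m,k}=0$ if $k<0$ or $k\geq m$. *)

theory Defs
  imports Complex_Main "HOL-Library.Function_Algebras" "HOL-Computational_Algebra.Polynomial"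
begin

text \<open>Q_m(x,y,z,t) is represented as a univariate polynomial in y whose coefficients
  are (polynomial) functions of the triple (x,z,t), with pointwise ring operations.\<close>

type_synonym coef = "real \<times> real \<times> real \<Rightarrow> real"

definition cx :: coef where "cx = (\<lambda>(x,z,t). x)"
definition cz :: coef where "cz = (\<lambda>(x,z,t). z)"
definition ct :: coef where "ct = (\<lambda>(x,z,t). t)"

text \<open>The operator y d/dy on polynomials in y (formal derivative, then multiplication by y);
  written out monomial-wise since pderiv needs a ring without zero divisors.\<close>
definition ydy :: "coef poly \<Rightarrow> coef poly" where
  "ydy p = (\<Sum>k\<le>degree p. monom (of_nat k * coeff p k) k)"

definition Qstep :: "nat \<Rightarrow> coef poly \<Rightarrow> coef poly" where
  "Qstep m p = smult (cx + of_nat m * cz) p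
     + [:ct, 1:] * (smult (of_nat m) p + ydy p)"

fun Q :: "nat \<Rightarrow> coef poly" where
  "Q 0 = 1"  (* unused; Q is indexed from 1 *)
| "Q (Suc 0) = 1"
| "Q (Suc (Suc m)) = Qstep (Suc m) (Q (Suc m))"

definition Qc :: "nat \<Rightarrow> int \<Rightarrow> real \<Rightarrow> real \<Rightarrow> real" where
  "Qc m k x t = (if k < 0 \<or> k \<ge> int m then 0 else coeff (Q m) (nat k) (x, 1, t))"

definition subst_n :: "nat \<Rightarrow> coef poly \<Rightarrow> coef poly" where
  "subst_n n p = map_poly (\<lambda>f. (\<lambda>(x,z,t). f (x + real n * z + real n * t, -t, -z))) p"

end

theory Submission
  imports Defs
begin

lemma coeff_ydy: "coeff (ydy p) k = of_nat k * coeff p k"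
proof (cases "k \<le> degree p")
  case True
  then show ?thesis unfolding ydy_def by (simp add: coeff_sum coeff_monom)
next
  case False
  then have "coeff p k = 0" by (simp add: coeff_eq_0)
  then show ?thesis using False unfolding ydy_def by (simp add: coeff_sum coeff_monom)
qed

lemma coeff_Qstep: "coeff (Qstep m p) k (x,z,t) =
   (x + real m * z + (real m + real k) * t) * coeff p k (x,z,t)
   + (if k = 0 then 0 else (real m + real k - 1) * coeff p (k-1) (x,z,t))"
proof -
  have e: "[:ct, 1:] * r = smult ct r + pCons 0 r" for r :: "coef poly"
    by (simp add: mult_pCons_left)
  show ?thesis
    unfolding Qstep_def e
    by (cases k) (auto simp: coeff_ydy cx_def cz_def ct_def algebra_simps)
qed

fun f :: "nat \<Rightarrow> int \<Rightarrow> real \<Rightarrow> real \<Rightarrow> real \<Rightarrow> real" where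
  "f 0 k x z t = 0"
| "f (Suc 0) k x z t = (if k = 0 then 1 else 0)"
| "f (Suc (Suc m)) k x z t = (if k < 0 then 0 else
      (x + real (Suc m) * z + (real (Suc m) + of_int k) * t) * f (Suc m) k x z t
      + (real m + of_int k) * f (Suc m) (k-1) x z t)"

lemma f_neg: "k < 0 \<Longrightarrow> f m k x z t = 0"
  by (induction m k x z t rule: f.induct) auto

lemma f_big: "k \<ge> int m \<Longrightarrow> f m k x z t = 0"
  by (induction m k x z t rule: f.induct) auto

lemma coeff_Q: "m \<ge> 1 \<Longrightarrow> coeff (Q m) k (x,z,t) = f m (int k) x z t"
proof (induction m arbitrary: k)
  case 0 then show ?case by simp
next
  case (Suc m)
  show ?case
  proof (cases m)
    case 0 then show ?thesis by (cases k) auto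
  next
    case (Suc m')
    then have "m \<ge> 1" by simp
    note IH = Suc.IH[OF this]
    have q: "Q (Suc m) = Qstep m (Q m)" using Suc by simp
    have "coeff (Q (Suc m)) k (x, z, t) = f (Suc m) (int k) x z t"
      unfolding q coeff_Qstep IH using Suc
      by (cases k) (auto simp: f_neg of_nat_diff algebra_simps)
    then show ?thesis .
  qed
qed

lemma f_rev: "f (Suc (Suc m)) k x z t = (x + z + t - of_int k * z) * f (Suc m) k (x+z+t) z t
   + (real m + of_int k) * f (Suc m) (k-1) (x+z+t) z t"
proof (induction m arbitrary: k x)
  case 0
  show ?case
  proof (cases "k < 0")
    case True then show ?thesis by (simp add: f_neg)
  next
    case False
    then consider "k = 0" | "k = 1" | "k \<ge> 2" by linarith
    then show ?thesis by cases (auto simp: algebra_simps)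
  qed
next
  case (Suc m)
  show ?case
  proof (cases "k < 0")
    case True then show ?thesis by (simp add: f_neg)
  next
    case False
    define w where "w = x + z + t"
    have L: "f (Suc (Suc (Suc m))) k x z t =
       (x + real (Suc (Suc m)) * z + (real (Suc (Suc m)) + of_int k) * t) * f (Suc (Suc m)) k x z t
      + (real (Suc m) + of_int k) * f (Suc (Suc m)) (k-1) x z t"
      using False by simp
    have R1: "f (Suc (Suc m)) k w z t =
       (w + real (Suc m) * z + (real (Suc m) + of_int k) * t) * f (Suc m) k w z t
      + (real m + of_int k) * f (Suc m) (k-1) w z t"
      using False by simp
    have R2: "f (Suc (Suc m)) (k-1) w z t =
       (w + real (Suc m) * z + (real (Suc m) + of_int (k-1)) * t) * f (Suc m) (k-1) w z t
      + (real m + of_int (k-1)) * f (Suc m) (k-1-1) w z t"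
      using False by (cases "k = 0") (simp_all add: f_neg)
    show ?thesis
      unfolding L Suc.IH[of k x] Suc.IH[of "k-1" x] w_def[symmetric] R1 R2
      by (simp add: w_def algebra_simps)
  qed
qed

lemma f_sym: "m \<ge> 1 \<Longrightarrow> f m k (x + real m * (z + t)) (-t) (-z) = f m k x z t"
proof (induction m arbitrary: k x)
  case 0 then show ?case by simp
next
  case (Suc m)
  show ?case
  proof (cases m)
    case 0 then show ?thesis by simp
  next
    case (Suc m')
    then have m1: "m \<ge> 1" by simp
    show ?thesis
    proof (cases "k < 0")
      case True then show ?thesis by (simp add: f_neg)
    next
      case False
      have e: "x + real (Suc m) * (z + t) = (x + z + t) + real m * (z + t)"
        by (simp add: algebra_simps)
      define X where "X = x + real (Suc m) * (z + t)"
      have ih1: "f m k X (-t) (-z) = f m k (x+z+t) z t"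
        unfolding X_def e by (rule Suc.IH[OF m1])
      have ih2: "f m (k-1) X (-t) (-z) = f m (k-1) (x+z+t) z t"
        unfolding X_def e by (rule Suc.IH[OF m1])
      have s: "f (Suc m) k X (-t) (-z) = (X + real m * (-t) + (real m + of_int k) * (-z)) * f m k X (-t) (-z)
           + (real m' + of_int k) * f m (k-1) X (-t) (-z)"
        using False Suc by simp
      have "f (Suc m) k (x + real (Suc m) * (z + t)) (-t) (-z)
        = (x + real (Suc m) * (z + t) - real m * t - (real m + of_int k) * z) * f m k (x + z + t) z t
          + (real m' + of_int k) * f m (k-1) (x + z + t) z t"
        unfolding X_def[symmetric] s ih1 ih2 by (simp add: X_def algebra_simps)
      also have "\<dots> = f (Suc m) k x z t"
        using f_rev[of m' k x z t] Suc by (simp add: algebra_simps)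
      finally show ?thesis .
    qed
  qed
qed

lemma Qc_f: "m \<ge> 1 \<Longrightarrow> Qc m k x t = f m k x 1 t"
  unfolding Qc_def using coeff_Q[of m "nat k" x 1 t]
  by (auto simp: f_neg f_big)

lemma sym_all: "m \<ge> 1 \<Longrightarrow> Q m = subst_n m (Q m)"
proof (rule poly_eqI)
  fix k assume m: "m \<ge> 1"
  have z: "(\<lambda>(x, z, t). (0::coef) (x + real m * z + real m * t, - t, - z)) = 0"
    by (auto simp: fun_eq_iff)
  show "coeff (Q m) k = coeff (subst_n m (Q m)) k"
    unfolding subst_n_def
  proof (subst coeff_map_poly)
    show "(\<lambda>(x, z, t). (0::coef) (x + real m * z + real m * t, - t, - z)) = 0" by (rule z)
    show "coeff (Q m) k = (\<lambda>(x, z, t). coeff (Q m) k (x + real m * z + real m * t, - t, - z))"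
    proof (rule ext, clarify)
      fix x z t
      show "coeff (Q m) k (x, z, t) = coeff (Q m) k (x + real m * z + real m * t, - t, - z)"
        using f_sym[OF m, of "int k" x z t] coeff_Q[OF m]
        by (simp add: distrib_left add.assoc)
    qed
  qed
qed

theorem lemma6p1:
  fixes n :: nat
  assumes "n \<ge> 2"
  shows "Q n = subst_n n (Q n) \<longleftrightarrow>
    (\<forall>k::int. 0 \<le> k \<and> k \<le> int n - 1 \<longrightarrow>
      (\<forall>x t::real. Qc n k x t =
          (x - real_of_int k + t + 1) * Qc (n - 1) k (x + t + 1) t
          + (real n + real_of_int k - 2) * Qc (n - 1) (k - 1) (x + t + 1) t))"
proof -
  obtain m where n: "n = Suc (Suc m)" using assms by (metis add_2_eq_Suc le_Suc_ex)
  have A: "Q n = subst_n n (Q n)" using assms by (intro sym_all) simp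
  have B: "Qc n k x t =
          (x - real_of_int k + t + 1) * Qc (n - 1) k (x + t + 1) t
          + (real n + real_of_int k - 2) * Qc (n - 1) (k - 1) (x + t + 1) t" for k x t
    unfolding n using f_rev[of m k x 1 t]
    by (simp add: Qc_f algebra_simps)
  show ?thesis using A B by blast
qed

end
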